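(* For every integer $n\ge 4$ there exists a family of $\left\lfloor \frac{6(n-1)}{5}\right\rfloor$ even cycles on a vertex set of size $n$ which contains no rainbow even cycle.
   Context: A (colored) graph is a finite set $\mathsf G$ of pairs $(e,\alpha)$, where the $e$'s are pairwise distinct 2-element subsets $\{u,v\}$ (written $uv$) of a vertex set and $\alpha$ is a color (different edges may have the same color). $\chi(\mathsf G)$ is the set of colors used; $\mathsf G$ is rainbow if $|\chi(\mathsf G)|=|\mathsf G|$. A cycle is a colored graph whose underlying uncolored edge set forms a cycle; it is even if its number of edges is even. A family of cycles on a vertex set $V$ is a list $(\mathsf D_1,\dots,\mathsf D_m)$ of cycles with vertices in $V$, where all edges of $\mathsf D_i$ receive one color $\alpha_i$ and $\alpha_1,\dots,\alpha_m$ are pairwise distinct (the underlying uncolored cycles may coincide). The family contains a rainbow even cycle if there is an even cycle $\mathsf G\subseteq\bigcup_i\mathsf D_i$ that is rainbow, i.e. formed by edges from pairwise distinct $\mathsf D_i$'s. *)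

theory Defs
  imports Main
begin

definition is_cycle :: "'a set set \<Rightarrow> bool" where
  "is_cycle E \<longleftrightarrow> (\<exists>vs. distinct vs \<and> length vs \<ge> 3 \<and>
      E = {{vs ! i, vs ! ((i + 1) mod length vs)} | i. i < length vs})"

definition is_even_cycle :: "'a set set \<Rightarrow> bool" where
  "is_even_cycle E \<longleftrightarrow> is_cycle E \<and> even (card E)"

text \<open>A family of even cycles on vertex set V: the i-th cycle has color i,
  so colors are pairwise distinct automatically.\<close>
definition even_cycle_family_on :: "'a set \<Rightarrow> 'a set set list \<Rightarrow> bool" where
  "even_cycle_family_on V Ds \<longleftrightarrow>
     (\<forall>D\<in>set Ds. is_even_cycle D \<and> (\<forall>e\<in>D. e \<subseteq> V))"

definition has_rainbow_even_cycle :: "'a set set list \<Rightarrow> bool" where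
  "has_rainbow_even_cycle Ds \<longleftrightarrow>
     (\<exists>C f. is_even_cycle C \<and> inj_on f C \<and>
        (\<forall>e\<in>C. f e < length Ds \<and> e \<in> Ds ! f e))"

end

theory Submission
  imports Defs
begin


definition cedge :: "nat list \<Rightarrow> nat \<Rightarrow> nat set" where
  "cedge vs i = {vs ! i, vs ! ((i + 1) mod length vs)}"

lemma is_cycle_obtain:
  fixes C :: "nat set set"
  assumes "is_cycle C"
  obtains vs where "distinct vs" "length vs \<ge> 3" "C = cedge vs ` {..<length vs}"
proof -
  from assms obtain vs where "distinct vs" "length vs \<ge> 3"
    "C = {{vs ! i, vs ! ((i + 1) mod length vs)} | i. i < length vs}"
    unfolding is_cycle_def by blast
  moreover have "{{vs ! i, vs ! ((i + 1) mod length vs)} | i. i < length vs} = cedge vs ` {..<length vs}"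
    unfolding cedge_def by auto
  ultimately show ?thesis using that by auto
qed

lemma cedge_inj:
  assumes "distinct vs" "length vs \<ge> 3"
  shows "inj_on (cedge vs) {..<length vs}"
proof (rule inj_onI)
  fix i j assume i: "i \<in> {..<length vs}" and j: "j \<in> {..<length vs}" and eq: "cedge vs i = cedge vs j"
  let ?L = "length vs"
  have i': "i < ?L" and j': "j < ?L" using i j by auto
  have L0: "0 < ?L" using assms by auto
  have si: "(i+1) mod ?L < ?L" and sj: "(j+1) mod ?L < ?L" using L0 by auto
  from eq have "(vs!i = vs!j \<and> vs!((i+1) mod ?L) = vs!((j+1) mod ?L)) \<or>
       (vs!i = vs!((j+1) mod ?L) \<and> vs!((i+1) mod ?L) = vs!j)"
    unfolding cedge_def by (simp add: doubleton_eq_iff)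
  then show "i = j"
  proof
    assume "vs!i = vs!j \<and> vs!((i+1) mod ?L) = vs!((j+1) mod ?L)"
    then show ?thesis using assms(1) i' j' nth_eq_iff_index_eq by blast
  next
    assume h: "vs!i = vs!((j+1) mod ?L) \<and> vs!((i+1) mod ?L) = vs!j"
    have a: "i = (j+1) mod ?L" using h assms(1) i' sj nth_eq_iff_index_eq by blast
    have b: "(i+1) mod ?L = j" using h assms(1) j' si nth_eq_iff_index_eq by blast
    show ?thesis
    proof (cases "j + 1 < ?L")
      case True
      then have "i = j+1" using a by simp
      then have "i + 1 < ?L \<or> i + 1 = ?L" using i' by auto
      then show ?thesis using b \<open>i = j+1\<close> assms(2) True by auto
    next
      case False
      then have "j + 1 = ?L" using j' by auto
      then have "i = 0" using a by simp
      then have "j = 1" using b assms(2) by simp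
      then show ?thesis using \<open>j+1 = ?L\<close> assms(2) by simp
    qed
  qed
qed

lemma card_cycle:
  assumes "distinct vs" "length vs \<ge> 3"
  shows "card (cedge vs ` {..<length vs}) = length vs"
  using card_image[OF cedge_inj[OF assms]] by simp

lemma cycle_deg:
  fixes C :: "nat set set"
  assumes "is_cycle C"
  shows "card {e\<in>C. v \<in> e} = 0 \<or> card {e\<in>C. v \<in> e} = 2"
proof -
  obtain vs where d: "distinct vs" and l: "length vs \<ge> 3" and C: "C = cedge vs ` {..<length vs}"
    using is_cycle_obtain[OF assms] by blast
  let ?L = "length vs"
  have L0: "0 < ?L" using l by linarith
  show ?thesis
  proof (cases "v \<in> set vs")
    case False
    have "\<forall>i<?L. (i+1) mod ?L < ?L" using L0 by simp
    then have "\<forall>i<?L. vs ! ((i+1) mod ?L) \<in> set vs" by auto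
    then have "{e\<in>C. v \<in> e} = {}" using False l unfolding C cedge_def by auto
    then show ?thesis by (metis card.empty)
  next
    case True
    then obtain p where p: "p < ?L" "vs ! p = v" by (auto simp: in_set_conv_nth)
    define q where "q = (if p = 0 then ?L - 1 else p - 1)"
    have q: "q < ?L" using L0 p unfolding q_def by auto
    have qp: "(q + 1) mod ?L = p"
    proof (cases "p = 0")
      case True then have "q + 1 = ?L" unfolding q_def using L0 by simp
      then show ?thesis using True by simp
    next
      case False then have "q + 1 = p" unfolding q_def by simp
      then show ?thesis using p by simp
    qed
    have pq: "p \<noteq> q" unfolding q_def using l by auto
    have "{e\<in>C. v \<in> e} = cedge vs ` {p, q}"
    proof
      show "{e\<in>C. v \<in> e} \<subseteq> cedge vs ` {p, q}"
      proof
        fix e assume "e \<in> {e\<in>C. v \<in> e}"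
        then obtain i where i: "i < ?L" "e = cedge vs i" "v \<in> e" unfolding C by auto
        have si: "(i+1) mod ?L < ?L" using L0 by simp
        from i have "vs ! i = vs ! p \<or> vs ! ((i+1) mod ?L) = vs ! p" unfolding cedge_def using p by auto
        then have "i = p \<or> (i+1) mod ?L = p" using d i(1) si p(1) nth_eq_iff_index_eq by blast
        moreover have "(i+1) mod ?L = p \<Longrightarrow> i = q"
        proof -
          assume h: "(i+1) mod ?L = p"
          show "i = q"
          proof (cases "i + 1 < ?L")
            case True
            then have "i + 1 = p" using h by simp
            then show ?thesis unfolding q_def by auto
          next
            case False
            then have "i + 1 = ?L" using i(1) by simp
            then have "p = 0" using h by simp
            then show ?thesis unfolding q_def using \<open>i + 1 = ?L\<close> by simp
          qed
        qed
        ultimately show "e \<in> cedge vs ` {p, q}" using i by auto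
      qed
    next
      show "cedge vs ` {p, q} \<subseteq> {e\<in>C. v \<in> e}"
        using p q qp unfolding C cedge_def by auto
    qed
    moreover have "card (cedge vs ` {p, q}) = 2"
      using inj_on_subset[OF cedge_inj[OF d l], of "{p,q}"] p q pq
      by (simp add: card_image)
    ultimately show ?thesis by simp
  qed
qed

lemma even_cycle_card4:
  fixes C :: "nat set set"
  assumes "is_even_cycle C" shows "card C \<ge> 4" "even (card C)" "finite C"
proof -
  obtain vs where d: "distinct vs" and l: "length vs \<ge> 3" and C: "C = cedge vs ` {..<length vs}"
    using is_cycle_obtain assms unfolding is_even_cycle_def by blast
  have "card C = length vs" using card_cycle[OF d l] C by simp
  moreover have "even (card C)" using assms unfolding is_even_cycle_def by simp
  ultimately show "card C \<ge> 4" using l by presburger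
  show "even (card C)" by fact
  show "finite C" using C by simp
qed


lemma ivt_nat:
  fixes g :: "nat \<Rightarrow> nat"
  assumes adj: "\<And>t. (g t \<le> h \<and> g (Suc t) \<le> h) \<or> (h \<le> g t \<and> h \<le> g (Suc t))"
  shows "(g a < h \<and> h < g (a + d)) \<or> (h < g a \<and> g (a + d) < h) \<Longrightarrow> \<exists>t. a < t \<and> t < a + d \<and> g t = h"
proof (induction d)
  case 0 then show ?case by auto
next
  case (Suc d)
  have A: "(g (a+d) \<le> h \<and> g (a + Suc d) \<le> h) \<or> (h \<le> g (a+d) \<and> h \<le> g (a + Suc d))"
    using adj[of "a+d"] by simp
  show ?case
  proof (cases "g (a+d) = h")
    case True
    have "d \<noteq> 0"
    proof
      assume "d = 0"
      then have "g a = h" using True by simp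
      then show False using Suc.prems by auto
    qed
    then have "a < a + d" by simp
    then show ?thesis using True by (intro exI[of _ "a+d"]) simp
  next
    case False
    then have "(g a < h \<and> h < g (a + d)) \<or> (h < g a \<and> g (a + d) < h)"
      using Suc.prems A by auto
    then obtain t where "a < t \<and> t < a + d \<and> g t = h" using Suc.IH by blast
    then show ?thesis by (intro exI[of _ t]) auto
  qed
qed

lemma mod_diff_False:
  fixes t1 t2 L :: nat
  assumes "t1 < t2" "t2 < t1 + L" "t1 mod L = t2 mod L"
  shows False
proof -
  have "L dvd (t2 - t1)" using assms mod_eq_dvd_iff_nat[of t1 t2 L] by (simp add: mod_eq_dvd_iff_nat)
  moreover have "0 < t2 - t1" "t2 - t1 < L" using assms by auto
  ultimately show False using nat_dvd_not_less by blast
qed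

lemma block:
  fixes C :: "nat set set"
  assumes cyc: "is_cycle C" and sep: "\<forall>e\<in>C. e \<subseteq> {..h} \<or> e \<subseteq> {h..}"
  shows "(\<forall>e\<in>C. e \<subseteq> {..h}) \<or> (\<forall>e\<in>C. e \<subseteq> {h..})"
proof (rule ccontr)
  assume nc: "\<not> ?thesis"
  obtain vs where d: "distinct vs" and l: "length vs \<ge> 3" and C: "C = cedge vs ` {..<length vs}"
    using is_cycle_obtain[OF cyc] by blast
  let ?L = "length vs"
  have L0: "0 < ?L" using l by linarith
  define g where "g t = vs ! (t mod ?L)" for t
  have adj: "(g t \<le> h \<and> g (Suc t) \<le> h) \<or> (h \<le> g t \<and> h \<le> g (Suc t))" for t
  proof -
    have "cedge vs (t mod ?L) \<in> C" using C L0 by auto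
    moreover have "cedge vs (t mod ?L) = {g t, g (Suc t)}"
      unfolding cedge_def g_def by (simp add: mod_Suc_eq)
    ultimately show ?thesis using sep by auto
  qed
  have vert: "\<exists>i<?L. vs ! i = x" if "e \<in> C" "x \<in> e" for e x
  proof -
    have "e \<in> cedge vs ` {..<?L}" using that(1) C by simp
    then obtain i where i: "i < ?L" "e = cedge vs i" by (auto simp del: lessThan_iff simp add: lessThan_iff)
    have "(i+1) mod ?L < ?L" using L0 by simp
    then show ?thesis using i that unfolding cedge_def by auto
  qed
  from nc obtain e1 e2 x1 x2 where "e1 \<in> C" "x1 \<in> e1" "x1 > h" "e2 \<in> C" "x2 \<in> e2" "x2 < h"
    by (auto simp: subset_eq not_le) 
  then obtain a c where a: "a < ?L" "vs ! a < h" and c: "c < ?L" "vs ! c > h"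
    using vert by metis
  have "a \<noteq> c" using a c by auto
  define p where "p = min a c"
  define q where "q = max a c"
  have pq: "p < q" "q < ?L" using a c \<open>a \<noteq> c\<close> unfolding p_def q_def by (auto simp: min_def max_def)
  have gp: "g p = vs ! p" "g q = vs ! q" "g (p + ?L) = vs ! p" using pq unfolding g_def by auto
  have opp: "(g p < h \<and> h < g q) \<or> (h < g p \<and> g q < h)"
    using a c gp unfolding p_def q_def by (auto simp: min_def max_def)
  obtain t1 where t1: "p < t1" "t1 < q" "g t1 = h"
    using ivt_nat[of g h p "q - p", OF adj] opp pq by auto
  have opp2: "(g q < h \<and> h < g (q + (p + ?L - q))) \<or> (h < g q \<and> g (q + (p + ?L - q)) < h)"
    using opp gp pq by auto
  obtain t2 where t2: "q < t2" "t2 < p + ?L" "g t2 = h"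
    using ivt_nat[of g h q "p + ?L - q", OF adj] opp2 pq by auto
  have "t1 mod ?L = t2 mod ?L"
  proof -
    have "vs ! (t1 mod ?L) = vs ! (t2 mod ?L)" using t1 t2 unfolding g_def by simp
    then show ?thesis using d L0 nth_eq_iff_index_eq by (metis mod_less_divisor)
  qed
  then show False using mod_diff_False[of t1 t2 ?L] t1 t2 by auto
qed



lemma rainbow_count:
  fixes C :: "nat set set"
  assumes inj: "inj_on f C" and col: "\<forall>e\<in>C. f e < length Ds \<and> e \<in> Ds ! f e"
    and A: "A \<subseteq> C" and fin: "finite C"
  shows "card A \<le> length (filter (\<lambda>X. X \<inter> A \<noteq> {}) Ds)"
proof -
  have "f ` A \<subseteq> {i. i < length Ds \<and> Ds ! i \<inter> A \<noteq> {}}" using col A by blast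
  then have "card (f ` A) \<le> card {i. i < length Ds \<and> Ds ! i \<inter> A \<noteq> {}}"
    by (intro card_mono) auto
  moreover have "card (f ` A) = card A" using inj A by (meson card_image inj_on_subset)
  ultimately show ?thesis by (simp add: length_filter_conv_card)
qed

definition NR :: "nat set set list \<Rightarrow> bool" where
  "NR D \<longleftrightarrow> (\<forall>C. is_even_cycle C \<longrightarrow> C \<subseteq> \<Union>(set D) \<longrightarrow>
      (\<forall>A\<subseteq>C. card A \<le> length (filter (\<lambda>X. X \<inter> A \<noteq> {}) D)) \<longrightarrow> False)"

fun nt :: "bool list \<Rightarrow> nat" where
  "nt [] = 0" | "nt (x # xs) = (if x then Suc (nt xs) else nt xs)"
fun zb :: "bool list \<Rightarrow> bool" where
  "zb [] = True" | "zb (x # xs) = (\<not> x \<and> zb xs)"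
fun ob :: "bool list \<Rightarrow> bool" where
  "ob [] = False" | "ob (x # xs) = ((x \<and> zb xs) \<or> (\<not> x \<and> ob xs))"
fun tb :: "bool list \<Rightarrow> bool" where
  "tb [] = False" | "tb (x # xs) = ((x \<and> ob xs) \<or> (\<not> x \<and> tb xs))"
fun pb :: "bool list \<Rightarrow> bool" where
  "pb [] = False" | "pb (x # xs) = (x \<noteq> pb xs)"
fun lb :: "nat \<Rightarrow> bool list \<Rightarrow> bool" where
  "lb m [] = True" | "lb 0 (x # xs) = (\<not> x \<and> lb 0 xs)"
| "lb (Suc m) (x # xs) = ((x \<and> lb m xs) \<or> (\<not> x \<and> lb (Suc m) xs))"

lemma zb_iff: "zb bs \<longleftrightarrow> nt bs = 0"
  by (induction bs) auto
lemma ob_iff: "ob bs \<longleftrightarrow> nt bs = 1"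
  by (induction bs) (auto simp: zb_iff)
lemma tb_iff: "tb bs \<longleftrightarrow> nt bs = 2"
  by (induction bs) (auto simp: ob_iff)
lemma pb_iff: "pb bs \<longleftrightarrow> odd (nt bs)"
  by (induction bs) auto
lemma lb_iff: "lb m bs \<longleftrightarrow> nt bs \<le> m"
proof (induction bs arbitrary: m)
  case Nil then show ?case by simp
next
  case (Cons x xs)
  show ?case
  proof (cases m)
    case 0
    then show ?thesis using Cons.IH[of 0] by auto
  next
    case (Suc k)
    then show ?thesis using Cons.IH[of k] Cons.IH[of "Suc k"] by auto
  qed
qed

lemma card_inter_list:
  "distinct L \<Longrightarrow> card (C \<inter> set L) = nt ((map (\<lambda>e. e \<in> C) L))"
proof (induction L)
  case Nil then show ?case by simp
next
  case (Cons x L)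
  then have "x \<notin> set L" "distinct L" by auto
  show ?case
  proof (cases "x \<in> C")
    case True
    then have "C \<inter> set (x # L) = insert x (C \<inter> set L)" by auto
    then show ?thesis using Cons \<open>x \<notin> set L\<close> True by simp
  next
    case False
    then have "C \<inter> set (x # L) = C \<inter> set L" by auto
    then show ?thesis using Cons False by simp
  qed
qed

lemma gadget_facts:
  fixes C :: "nat set set"
  assumes ev: "is_even_cycle C" and sub: "C \<subseteq> set EL" and dist: "distinct EL"
  shows "\<And>v. zb (map (\<lambda>e. e \<in> C) (filter (\<lambda>e. v \<in> e) EL)) \<or> tb (map (\<lambda>e. e \<in> C) (filter (\<lambda>e. v \<in> e) EL))"
    and "\<not> pb (map (\<lambda>e. e \<in> C) EL)" and "\<not> zb (map (\<lambda>e. e \<in> C) EL)"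
proof -
  have cyc: "is_cycle C" using ev unfolding is_even_cycle_def by simp
  fix v
  have e1: "{e\<in>C. v \<in> e} = C \<inter> set (filter (\<lambda>e. v \<in> e) EL)" using sub by auto
  have "card (C \<inter> set (filter (\<lambda>e. v \<in> e) EL)) = nt ((map (\<lambda>e. e \<in> C) (filter (\<lambda>e. v \<in> e) EL)))"
    by (rule card_inter_list) (simp add: dist)
  then show "zb (map (\<lambda>e. e \<in> C) (filter (\<lambda>e. v \<in> e) EL)) \<or> tb (map (\<lambda>e. e \<in> C) (filter (\<lambda>e. v \<in> e) EL))"
    using cycle_deg[OF cyc, of v] unfolding e1 zb_iff tb_iff by auto
next
  have cC: "card C = nt ((map (\<lambda>e. e \<in> C) EL))"
    using card_inter_list[OF dist, of C] sub by (simp add: Int_absorb2)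
  show "\<not> pb (map (\<lambda>e. e \<in> C) EL)" using even_cycle_card4(2)[OF ev] cC pb_iff by simp
  show "\<not> zb (map (\<lambda>e. e \<in> C) EL)" using even_cycle_card4(1)[OF ev] cC zb_iff by simp
qed

lemma filter_count_mono:
  "A \<subseteq> P \<Longrightarrow> length (filter (\<lambda>X. X \<inter> A \<noteq> {}) D) \<le> length (filter (\<lambda>X. X \<inter> P \<noteq> {}) D)"
proof (induction D)
  case Nil then show ?case by simp
next
  case (Cons a D) then show ?case by auto
qed

lemma priv_count:
  fixes C :: "nat set set"
  assumes "\<forall>A\<subseteq>C. card A \<le> length (filter (\<lambda>X. X \<inter> A \<noteq> {}) D)" "distinct PL"
    "length (filter (\<lambda>X. X \<inter> set PL \<noteq> {}) D) \<le> m"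
  shows "lb m (map (\<lambda>e. e \<in> C) PL)"
proof -
  have "card (C \<inter> set PL) \<le> length (filter (\<lambda>X. X \<inter> (C \<inter> set PL) \<noteq> {}) D)" using assms(1) by auto
  also have "\<dots> \<le> length (filter (\<lambda>X. X \<inter> set PL \<noteq> {}) D)" by (rule filter_count_mono) auto
  finally show ?thesis using card_inter_list[OF assms(2), of C] assms(3) lb_iff by (simp add: Int_commute)
qed

definition TQ1 :: "nat \<Rightarrow> nat set set" where
  "TQ1 b = {{b, b+1}, {b+1, b+5}, {b+5, b+2}, {b+2, b}}"
definition TQ2 :: "nat \<Rightarrow> nat set set" where
  "TQ2 b = {{b, b+3}, {b+3, b+4}, {b+4, b+5}, {b+5, b}}"
definition Tfam :: "nat \<Rightarrow> nat set set list" where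
  "Tfam b = replicate 3 (TQ1 b) @ replicate 3 (TQ2 b)"

lemma NR_T: "NR (Tfam b)"
  unfolding NR_def
proof (intro allI impI)
  fix C :: "nat set set"
  assume ev: "is_even_cycle C" and sub0: "C \<subseteq> \<Union>(set (Tfam b))"
    and cnt: "\<forall>A\<subseteq>C. card A \<le> length (filter (\<lambda>X. X \<inter> A \<noteq> {}) (Tfam b))"
  define L1 where "L1 = [{b, b+1}, {b+1, b+5}, {b+5, b+2}, {b+2, b}]"
  define L2 where "L2 = [{b, b+3}, {b+3, b+4}, {b+4, b+5}, {b+5, b}]"
  have sub: "C \<subseteq> set (L1 @ L2)" using sub0 unfolding Tfam_def TQ1_def TQ2_def L1_def L2_def by auto
  have dist: "distinct (L1 @ L2)" unfolding L1_def L2_def by (auto simp: doubleton_eq_iff)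
  have d1: "distinct L1" and d2: "distinct L2" using dist by auto
  have c1: "lb (Suc (Suc (Suc 0))) (map (\<lambda>e. e \<in> C) L1)"
    by (rule priv_count[OF cnt d1]) (auto simp: Tfam_def TQ1_def TQ2_def L1_def doubleton_eq_iff)
  have c2: "lb (Suc (Suc (Suc 0))) (map (\<lambda>e. e \<in> C) L2)"
    by (rule priv_count[OF cnt d2]) (auto simp: Tfam_def TQ1_def TQ2_def L2_def doubleton_eq_iff)
  note gf = gadget_facts[OF ev sub dist]
  show False using c1 c2 gf(2) gf(3) gf(1)[of b] gf(1)[of "b+1"] gf(1)[of "b+2"] gf(1)[of "b+3"]
     gf(1)[of "b+4"] gf(1)[of "b+5"]
    unfolding L1_def L2_def apply (simp (no_asm_use))
    by sat
qed



definition G7_Q0 :: "nat set set" where "G7_Q0 = set [{0, 1}, {1, 3}, {3, 2}, {2, 0}]"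
definition G7_Q1 :: "nat set set" where "G7_Q1 = set [{0, 3}, {3, 5}, {5, 4}, {4, 0}]"
definition G7_Q2 :: "nat set set" where "G7_Q2 = set [{1, 4}, {4, 6}, {6, 5}, {5, 1}]"
definition G7_fam :: "nat set set list" where "G7_fam = replicate 3 G7_Q0 @ replicate 1 G7_Q1 @ replicate 3 G7_Q2"
lemma NR_G7: "NR G7_fam"
  unfolding NR_def
proof (intro allI impI)
  fix C :: "nat set set"
  assume ev: "is_even_cycle C" and sub0: "C \<subseteq> \<Union>(set G7_fam)"
    and cnt: "\<forall>A\<subseteq>C. card A \<le> length (filter (\<lambda>X. X \<inter> A \<noteq> {}) G7_fam)"
  define EL where "EL = ([{0, 1}, {1, 3}, {3, 2}, {2, 0}, {0, 3}, {3, 5}, {5, 4}, {4, 0}, {1, 4}, {4, 6}, {6, 5}, {5, 1}] :: nat set list)"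
  have "\<Union>(set G7_fam) \<subseteq> set EL" unfolding G7_fam_def G7_Q0_def G7_Q1_def G7_Q2_def EL_def by simp
  then have sub: "C \<subseteq> set EL" using sub0 by (rule_tac subset_trans) auto
  have dist: "distinct EL" unfolding EL_def by (simp add: doubleton_eq_iff)
  note gf = gadget_facts[OF ev sub dist]
  have c0: "lb (Suc (Suc (Suc (0)))) (map (\<lambda>e. e \<in> C) [{0, 1}, {1, 3}, {3, 2}, {2, 0}])"
    by (rule priv_count[OF cnt]) (auto simp: G7_fam_def G7_Q0_def G7_Q1_def G7_Q2_def doubleton_eq_iff)
  have c1: "lb (Suc (0)) (map (\<lambda>e. e \<in> C) [{0, 3}, {3, 5}, {5, 4}, {4, 0}])"
    by (rule priv_count[OF cnt]) (auto simp: G7_fam_def G7_Q0_def G7_Q1_def G7_Q2_def doubleton_eq_iff)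
  have c2: "lb (Suc (Suc (Suc (0)))) (map (\<lambda>e. e \<in> C) [{1, 4}, {4, 6}, {6, 5}, {5, 1}])"
    by (rule priv_count[OF cnt]) (auto simp: G7_fam_def G7_Q0_def G7_Q1_def G7_Q2_def doubleton_eq_iff)
  show False using c0 c1 c2 gf(2) gf(3) gf(1)[of 0] gf(1)[of 1] gf(1)[of 2] gf(1)[of 3] gf(1)[of 4] gf(1)[of 5] gf(1)[of 6]
    unfolding EL_def apply (simp (no_asm_use))
    by sat
qed
definition G8_Q0 :: "nat set set" where "G8_Q0 = set [{0, 1}, {1, 7}, {7, 4}, {4, 3}, {3, 2}, {2, 0}]"
definition G8_Q1 :: "nat set set" where "G8_Q1 = set [{0, 7}, {7, 6}, {6, 5}, {5, 0}]"
definition G8_fam :: "nat set set list" where "G8_fam = replicate 5 G8_Q0 @ replicate 3 G8_Q1"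
lemma NR_G8: "NR G8_fam"
  unfolding NR_def
proof (intro allI impI)
  fix C :: "nat set set"
  assume ev: "is_even_cycle C" and sub0: "C \<subseteq> \<Union>(set G8_fam)"
    and cnt: "\<forall>A\<subseteq>C. card A \<le> length (filter (\<lambda>X. X \<inter> A \<noteq> {}) G8_fam)"
  define EL where "EL = ([{0, 1}, {1, 7}, {7, 4}, {4, 3}, {3, 2}, {2, 0}, {0, 7}, {7, 6}, {6, 5}, {5, 0}] :: nat set list)"
  have "\<Union>(set G8_fam) \<subseteq> set EL" unfolding G8_fam_def G8_Q0_def G8_Q1_def EL_def by simp
  then have sub: "C \<subseteq> set EL" using sub0 by (rule_tac subset_trans) auto
  have dist: "distinct EL" unfolding EL_def by (simp add: doubleton_eq_iff)
  note gf = gadget_facts[OF ev sub dist]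
  have c0: "lb (Suc (Suc (Suc (Suc (Suc (0)))))) (map (\<lambda>e. e \<in> C) [{0, 1}, {1, 7}, {7, 4}, {4, 3}, {3, 2}, {2, 0}])"
    by (rule priv_count[OF cnt]) (auto simp: G8_fam_def G8_Q0_def G8_Q1_def doubleton_eq_iff)
  have c1: "lb (Suc (Suc (Suc (0)))) (map (\<lambda>e. e \<in> C) [{0, 7}, {7, 6}, {6, 5}, {5, 0}])"
    by (rule priv_count[OF cnt]) (auto simp: G8_fam_def G8_Q0_def G8_Q1_def doubleton_eq_iff)
  show False using c0 c1 gf(2) gf(3) gf(1)[of 0] gf(1)[of 1] gf(1)[of 2] gf(1)[of 3] gf(1)[of 4] gf(1)[of 5] gf(1)[of 6] gf(1)[of 7]
    unfolding EL_def apply (simp (no_asm_use))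
    by sat
qed
definition GK_Q0 :: "nat set set" where "GK_Q0 = set [{0, 1}, {1, 2}, {2, 3}, {3, 0}]"
definition GK_fam :: "nat set set list" where "GK_fam = replicate 3 GK_Q0"
lemma NR_GK: "NR GK_fam"
  unfolding NR_def
proof (intro allI impI)
  fix C :: "nat set set"
  assume ev: "is_even_cycle C" and sub0: "C \<subseteq> \<Union>(set GK_fam)"
    and cnt: "\<forall>A\<subseteq>C. card A \<le> length (filter (\<lambda>X. X \<inter> A \<noteq> {}) GK_fam)"
  define EL where "EL = ([{0, 1}, {1, 2}, {2, 3}, {3, 0}] :: nat set list)"
  have "\<Union>(set GK_fam) \<subseteq> set EL" unfolding GK_fam_def GK_Q0_def EL_def by simp
  then have sub: "C \<subseteq> set EL" using sub0 by (rule_tac subset_trans) auto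
  have dist: "distinct EL" unfolding EL_def by (simp add: doubleton_eq_iff)
  note gf = gadget_facts[OF ev sub dist]
  have c0: "lb (Suc (Suc (Suc (0)))) (map (\<lambda>e. e \<in> C) [{0, 1}, {1, 2}, {2, 3}, {3, 0}])"
    by (rule priv_count[OF cnt]) (auto simp: GK_fam_def GK_Q0_def doubleton_eq_iff)
  show False using c0 gf(2) gf(3) gf(1)[of 0] gf(1)[of 1] gf(1)[of 2] gf(1)[of 3]
    unfolding EL_def apply (simp (no_asm_use))
    by sat
qed
definition GF_Q0 :: "nat set set" where "GF_Q0 = set [{0, 1}, {1, 3}, {3, 2}, {2, 0}]"
definition GF_Q1 :: "nat set set" where "GF_Q1 = set [{0, 1}, {1, 4}, {4, 3}, {3, 0}]"
definition GF_fam :: "nat set set list" where "GF_fam = replicate 2 GF_Q0 @ replicate 2 GF_Q1"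
lemma NR_GF: "NR GF_fam"
  unfolding NR_def
proof (intro allI impI)
  fix C :: "nat set set"
  assume ev: "is_even_cycle C" and sub0: "C \<subseteq> \<Union>(set GF_fam)"
    and cnt: "\<forall>A\<subseteq>C. card A \<le> length (filter (\<lambda>X. X \<inter> A \<noteq> {}) GF_fam)"
  define EL where "EL = ([{0, 1}, {1, 3}, {3, 2}, {2, 0}, {1, 4}, {4, 3}, {3, 0}] :: nat set list)"
  have "\<Union>(set GF_fam) \<subseteq> set EL" unfolding GF_fam_def GF_Q0_def GF_Q1_def EL_def by simp
  then have sub: "C \<subseteq> set EL" using sub0 by (rule_tac subset_trans) auto
  have dist: "distinct EL" unfolding EL_def by (simp add: doubleton_eq_iff)
  note gf = gadget_facts[OF ev sub dist]
  have c0: "lb (Suc (Suc (0))) (map (\<lambda>e. e \<in> C) [{1, 3}, {3, 2}, {2, 0}])"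
    by (rule priv_count[OF cnt]) (auto simp: GF_fam_def GF_Q0_def GF_Q1_def doubleton_eq_iff)
  have c1: "lb (Suc (Suc (0))) (map (\<lambda>e. e \<in> C) [{1, 4}, {4, 3}, {3, 0}])"
    by (rule priv_count[OF cnt]) (auto simp: GF_fam_def GF_Q0_def GF_Q1_def doubleton_eq_iff)
  show False using c0 c1 gf(2) gf(3) gf(1)[of 0] gf(1)[of 1] gf(1)[of 2] gf(1)[of 3] gf(1)[of 4]
    unfolding EL_def apply (simp (no_asm_use))
    by sat
qed



definition Dfam :: "nat \<Rightarrow> nat set set list \<Rightarrow> nat \<Rightarrow> nat set set list" where
  "Dfam R D0 m = D0 @ concat (map (\<lambda>j. Tfam (R + 5 * j)) [0..<m])"

definition edge2 :: "nat set \<Rightarrow> bool" where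
  "edge2 e \<longleftrightarrow> (\<exists>u v. u \<noteq> v \<and> e = {u, v})"

lemma cycle_edge2:
  fixes C :: "nat set set"
  assumes "is_cycle C" "e \<in> C" shows "edge2 e"
proof -
  obtain vs where d: "distinct vs" and l: "length vs \<ge> 3" and C: "C = cedge vs ` {..<length vs}"
    using is_cycle_obtain[OF assms(1)] by blast
  have L0: "0 < length vs" using l by linarith
  obtain i where i: "i < length vs" "e = cedge vs i" using assms(2) C by auto
  have s: "(i + 1) mod length vs < length vs" using L0 by simp
  have "i \<noteq> (i + 1) mod length vs"
  proof (cases "i + 1 < length vs")
    case True then show ?thesis by simp
  next
    case False then have "i + 1 = length vs" using i by simp
    then show ?thesis using l by simp
  qed
  then have "vs ! i \<noteq> vs ! ((i + 1) mod length vs)" using d i(1) s nth_eq_iff_index_eq by blast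
  then show ?thesis unfolding edge2_def i(2) cedge_def by blast
qed

lemma edge2_pt:
  assumes "edge2 e" "e \<subseteq> {..p}" "e \<subseteq> {p::nat..}" shows False
proof -
  obtain u v where "u \<noteq> v" "e = {u, v}" using assms(1) unfolding edge2_def by blast
  then show False using assms(2,3) by auto
qed

lemma Tfam_edges:
  assumes "X \<in> set (Tfam b)" "e \<in> X" shows "e \<subseteq> {b..b+5}"
  using assms unfolding Tfam_def TQ1_def TQ2_def by auto

lemma set_Dfam: "X \<in> set (Dfam R D0 m) \<longleftrightarrow> X \<in> set D0 \<or> (\<exists>j<m. X \<in> set (Tfam (R + 5 * j)))"
  unfolding Dfam_def by auto

lemma filter_Dfam:
  assumes "j < m"
    and "\<forall>X\<in>set D0. \<not> P X" and "\<forall>j'<m. j' \<noteq> j \<longrightarrow> (\<forall>X\<in>set (Tfam (R + 5 * j')). \<not> P X)"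
  shows "filter P (Dfam R D0 m) = filter P (Tfam (R + 5 * j))"
proof -
  have u: "[0..<m] = [0..<j] @ j # [Suc j..<m]"
    using assms(1) by (metis upt_add_eq_append upt_conv_Cons le0 le_add_diff_inverse less_imp_le_nat)
  have "filter P D0 = []" using assms(2) by (simp add: filter_empty_conv)
  moreover have "filter P (concat (map (\<lambda>j. Tfam (R + 5 * j)) [0..<j])) = []"
  proof -
    have h: "\<And>y X. y < j \<Longrightarrow> X \<in> set (Tfam (R + 5 * y)) \<Longrightarrow> \<not> P X"
    proof -
      fix y X assume "y < j" "X \<in> set (Tfam (R + 5 * y))"
      moreover have "y < m" "y \<noteq> j" using \<open>y < j\<close> assms(1) by auto
      ultimately show "\<not> P X" using assms(3) by blast
    qed
    then show ?thesis by (auto simp: filter_empty_conv)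
  qed
  moreover have "filter P (concat (map (\<lambda>j. Tfam (R + 5 * j)) [Suc j..<m])) = []"
    using assms(3) by (auto simp: filter_empty_conv)
  ultimately show ?thesis unfolding Dfam_def u by simp
qed

lemma filter_Dfam0:
  assumes "\<forall>j<m. \<forall>X\<in>set (Tfam (R + 5 * j)). \<not> P X"
  shows "filter P (Dfam R D0 m) = filter P D0"
  using assms unfolding Dfam_def by (auto simp: filter_empty_conv)

lemma glue:
  assumes e0: "\<forall>X\<in>set D0. \<forall>e\<in>X. e \<subseteq> {..R}" and nr0: "NR D0"
  shows "\<not> has_rainbow_even_cycle (Dfam R D0 m)"
proof
  assume "has_rainbow_even_cycle (Dfam R D0 m)"
  then obtain C f where ev: "is_even_cycle C" and inj: "inj_on f C"
    and col: "\<forall>e\<in>C. f e < length (Dfam R D0 m) \<and> e \<in> Dfam R D0 m ! f e"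
    unfolding has_rainbow_even_cycle_def by blast
  let ?Ds = "Dfam R D0 m"
  have cyc: "is_cycle C" using ev unfolding is_even_cycle_def by simp
  have fin: "finite C" using even_cycle_card4(3)[OF ev] .
  have e2: "\<And>e. e \<in> C \<Longrightarrow> edge2 e" using cycle_edge2[OF cyc] by blast
  have inU: "\<And>e. e \<in> C \<Longrightarrow> \<exists>X\<in>set ?Ds. e \<in> X" using col by (metis nth_mem)
  have cnt: "\<And>A. A \<subseteq> C \<Longrightarrow> card A \<le> length (filter (\<lambda>X. X \<inter> A \<noteq> {}) ?Ds)"
    using rainbow_count[OF inj col _ fin] by blast
  have loc: "\<And>e. e \<in> C \<Longrightarrow> e \<subseteq> {..R} \<or> (\<exists>j<m. \<exists>X\<in>set (Tfam (R + 5 * j)). e \<in> X \<and> e \<subseteq> {R + 5 * j..R + 5 * j + 5})"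
  proof -
    fix e assume "e \<in> C"
    then obtain X where X: "X \<in> set ?Ds" "e \<in> X" using inU by blast
    then show "?thesis e" using e0 Tfam_edges unfolding set_Dfam by blast
  qed
  have sep: "\<forall>e\<in>C. e \<subseteq> {..R + 5 * i} \<or> e \<subseteq> {R + 5 * i..}" for i
  proof
    fix e assume eC: "e \<in> C"
    show "e \<subseteq> {..R + 5 * i} \<or> e \<subseteq> {R + 5 * i..}"
    proof (cases "e \<subseteq> {..R}")
      case True then show ?thesis by auto
    next
      case False
      then obtain j where j: "j < m" "e \<subseteq> {R + 5 * j..R + 5 * j + 5}" using loc[OF eC] by blast
      show ?thesis
      proof (cases "j < i")
        case True then have "R + 5 * j + 5 \<le> R + 5 * i" by simp
        then show ?thesis using j by auto
      next
        case False then have "R + 5 * i \<le> R + 5 * j" by simp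
        then show ?thesis using j by auto
      qed
    qed
  qed
  obtain vs where d: "distinct vs" and l: "length vs \<ge> 3" and Cv: "C = cedge vs ` {..<length vs}"
    using is_cycle_obtain[OF cyc] by blast
  have "cedge vs 0 \<in> C" using Cv l by auto
  then obtain e1 where e1: "e1 \<in> C" by blast
  define W where "W = \<Union>C"
  have Wfin: "finite W" unfolding W_def using fin e2 unfolding edge2_def by auto
  have "e1 \<noteq> {}" using e2[OF e1] unfolding edge2_def by auto
  then have Wne: "W \<noteq> {}" unfolding W_def using e1 by auto
  define x where "x = Min W"
  have xW: "x \<in> W" unfolding x_def using Wfin Wne by simp
  have xmin: "\<And>y. y \<in> W \<Longrightarrow> x \<le> y" unfolding x_def using Wfin by simp
  obtain ex where ex: "ex \<in> C" "x \<in> ex" using xW unfolding W_def by blast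
  show False
  proof (cases "x < R")
    case True
    have "(\<forall>e\<in>C. e \<subseteq> {..R + 5 * 0}) \<or> (\<forall>e\<in>C. e \<subseteq> {R + 5 * 0..})" by (rule block[OF cyc sep])
    moreover have "\<not> (\<forall>e\<in>C. e \<subseteq> {R..})" using ex True by fastforce
    ultimately have allR: "\<forall>e\<in>C. e \<subseteq> {..R}" by simp
    have notT: "\<forall>j<m. \<forall>X\<in>set (Tfam (R + 5 * j)). \<forall>e\<in>C. e \<notin> X"
    proof (intro allI impI ballI)
      fix j X e assume "j < m" "X \<in> set (Tfam (R + 5 * j))" "e \<in> C"
      show "e \<notin> X"
      proof
        assume "e \<in> X"
        then have "e \<subseteq> {R + 5 * j..R + 5 * j + 5}" using Tfam_edges[OF \<open>X \<in> _\<close>] by auto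
        then have "e \<subseteq> {R..}" by (auto simp: subset_eq)
        then show False using edge2_pt[OF e2[OF \<open>e \<in> C\<close>]] allR \<open>e \<in> C\<close> by blast
      qed
    qed
    have sub: "C \<subseteq> \<Union>(set D0)"
    proof
      fix e assume eC: "e \<in> C"
      then obtain X where X: "X \<in> set ?Ds" "e \<in> X" using inU by blast
      then show "e \<in> \<Union>(set D0)" using notT eC unfolding set_Dfam by blast
    qed
    have "\<forall>A\<subseteq>C. card A \<le> length (filter (\<lambda>X. X \<inter> A \<noteq> {}) D0)"
    proof (intro allI impI)
      fix A assume A: "A \<subseteq> C"
      have "filter (\<lambda>X. X \<inter> A \<noteq> {}) ?Ds = filter (\<lambda>X. X \<inter> A \<noteq> {}) D0"
        by (rule filter_Dfam0) (use notT A in blast)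
      then show "card A \<le> length (filter (\<lambda>X. X \<inter> A \<noteq> {}) D0)" using cnt[OF A] by simp
    qed
    then show False using nr0 ev sub unfolding NR_def by blast
  next
    case False
    define j where "j = (x - R) div 5"
    define b where "b = R + 5 * j"
    have bx: "b \<le> x" "x < b + 5" unfolding b_def j_def using False by auto
    have "(\<forall>e\<in>C. e \<subseteq> {..R + 5 * (j + 1)}) \<or> (\<forall>e\<in>C. e \<subseteq> {R + 5 * (j + 1)..})" by (rule block[OF cyc sep])
    then have up: "\<forall>e\<in>C. e \<subseteq> {..b + 5}" using ex bx unfolding b_def by fastforce
    have lo: "\<forall>e\<in>C. e \<subseteq> {b..}" using xmin bx unfolding W_def by fastforce
    have inb: "\<forall>e\<in>C. e \<subseteq> {b..b+5}" using up lo by (meson atLeastAtMost_iff atLeast_iff atMost_iff subset_iff)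
    have othT: "\<forall>j'<m. j' \<noteq> j \<longrightarrow> (\<forall>X\<in>set (Tfam (R + 5 * j')). \<forall>e\<in>C. e \<notin> X)"
    proof (intro allI impI ballI)
      fix j' X e assume "j' < m" "j' \<noteq> j" "X \<in> set (Tfam (R + 5 * j'))" "e \<in> C"
      show "e \<notin> X"
      proof
        assume "e \<in> X"
        then have eX: "e \<subseteq> {R + 5 * j'..R + 5 * j' + 5}" using Tfam_edges[OF \<open>X \<in> _\<close>] by auto
        have eb: "e \<subseteq> {b..b+5}" using inb \<open>e \<in> C\<close> by auto
        show False
        proof (cases "j' < j")
          case True
          then have "R + 5 * j' + 5 \<le> b" unfolding b_def by simp
          then have "e \<subseteq> {..b}" using eX by (force simp: subset_iff)
          moreover have "e \<subseteq> {b..}" using eb by (force simp: subset_iff)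
          ultimately show False using edge2_pt[OF e2[OF \<open>e \<in> C\<close>], of b] by blast
        next
          case False
          then have "b + 5 \<le> R + 5 * j'" unfolding b_def using \<open>j' \<noteq> j\<close> by simp
          then have "e \<subseteq> {b+5..}" using eX by (force simp: subset_iff)
          moreover have "e \<subseteq> {..b+5}" using eb by (force simp: subset_iff)
          ultimately show False using edge2_pt[OF e2[OF \<open>e \<in> C\<close>], of "b+5"] by blast
        qed
      qed
    qed
    have notD0: "\<forall>X\<in>set D0. \<forall>e\<in>C. e \<notin> X"
    proof (intro ballI)
      fix X e assume "X \<in> set D0" "e \<in> C"
      show "e \<notin> X"
      proof
        assume "e \<in> X"
        then have "e \<subseteq> {..R}" using e0 \<open>X \<in> set D0\<close> by blast
        moreover have "e \<subseteq> {b..b+5}" using inb \<open>e \<in> C\<close> by blast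
        then have "e \<subseteq> {R..}" unfolding b_def by (force simp: subset_iff)
        ultimately show False using edge2_pt[OF e2[OF \<open>e \<in> C\<close>]] by blast
      qed
    qed
    have jm: "j < m"
    proof -
      obtain X where X: "X \<in> set ?Ds" "e1 \<in> X" using inU[OF e1] by blast
      then obtain j' where "j' < m" "X \<in> set (Tfam (R + 5 * j'))" using notD0 e1 unfolding set_Dfam by blast
      then show ?thesis using othT X e1 by (cases "j' = j") auto
    qed
    have sub: "C \<subseteq> \<Union>(set (Tfam b))"
    proof
      fix e assume eC: "e \<in> C"
      then obtain X where X: "X \<in> set ?Ds" "e \<in> X" using inU by blast
      then obtain j' where "j' < m" "X \<in> set (Tfam (R + 5 * j'))" using notD0 eC unfolding set_Dfam by blast
      then have "j' = j" using othT X eC by blast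
      then show "e \<in> \<Union>(set (Tfam b))" using X \<open>X \<in> set (Tfam (R + 5 * j'))\<close> unfolding b_def by blast
    qed
    have "\<forall>A\<subseteq>C. card A \<le> length (filter (\<lambda>X. X \<inter> A \<noteq> {}) (Tfam b))"
    proof (intro allI impI)
      fix A assume A: "A \<subseteq> C"
      have "filter (\<lambda>X. X \<inter> A \<noteq> {}) ?Ds = filter (\<lambda>X. X \<inter> A \<noteq> {}) (Tfam (R + 5 * j))"
        by (rule filter_Dfam[OF jm]) (use notD0 othT A in blast)+
      then show "card A \<le> length (filter (\<lambda>X. X \<inter> A \<noteq> {}) (Tfam b))" using cnt[OF A] unfolding b_def by simp
    qed
    then show False using NR_T[of b] ev sub unfolding NR_def by blast
  qed
qed



lemma cedge_set: "cedge vs ` {..<length vs} = set (map (cedge vs) [0..<length vs])"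
  by (auto simp: atLeast0LessThan[symmetric])

lemma mk_even:
  assumes "distinct vs" "length vs \<ge> 3" "even (length vs)" "X = set (map (cedge vs) [0..<length vs])"
  shows "is_even_cycle X"
proof -
  have X: "X = cedge vs ` {..<length vs}" using assms(4) cedge_set by simp
  have "is_cycle X" unfolding is_cycle_def X cedge_def using assms(1,2) by blast
  moreover have "card X = length vs" using card_cycle[OF assms(1,2)] X by simp
  ultimately show ?thesis unfolding is_even_cycle_def using assms(3) by simp
qed

lemma TQ1_even: "is_even_cycle (TQ1 b)"
  by (rule mk_even[of "[b, b+1, b+5, b+2]"]) (auto simp: TQ1_def cedge_def upt_rec insert_commute)
lemma TQ2_even: "is_even_cycle (TQ2 b)"
  by (rule mk_even[of "[b, b+3, b+4, b+5]"]) (auto simp: TQ2_def cedge_def upt_rec insert_commute)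

lemma NR_nil: "NR []"
  unfolding NR_def using even_cycle_card4(1) by fastforce

lemma make:
  assumes e0: "\<forall>X\<in>set D0. \<forall>e\<in>X. e \<subseteq> {..R}" and nr0: "NR D0"
    and c0: "\<forall>D\<in>set D0. is_even_cycle D"
    and n: "R + 5 * m + 1 = n" and L: "length D0 + 6 * m = L"
  shows "\<exists>(V :: nat set) Ds. finite V \<and> card V = n \<and> length Ds = L \<and>
           even_cycle_family_on V Ds \<and> \<not> has_rainbow_even_cycle Ds"
proof (intro exI conjI)
  show "finite {0..<n}" by simp
  show "card {0..<n} = n" by simp
  show "length (Dfam R D0 m) = L" using L unfolding Dfam_def Tfam_def
    by (simp add: length_concat comp_def sum_list_triv)
  show "\<not> has_rainbow_even_cycle (Dfam R D0 m)" by (rule glue[OF e0 nr0])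
  show "even_cycle_family_on {0..<n} (Dfam R D0 m)"
    unfolding even_cycle_family_on_def
  proof
    fix D assume "D \<in> set (Dfam R D0 m)"
    then consider "D \<in> set D0" | j where "j < m" "D \<in> set (Tfam (R + 5 * j))" unfolding set_Dfam by blast
    then show "is_even_cycle D \<and> (\<forall>e\<in>D. e \<subseteq> {0..<n})"
    proof cases
      case 1
      then show ?thesis using c0 e0 n by fastforce
    next
      case 2
      have "is_even_cycle D" using 2(2) TQ1_even TQ2_even unfolding Tfam_def by auto
      moreover have "\<forall>e\<in>D. e \<subseteq> {0..<n}"
      proof
        fix e assume "e \<in> D"
        then have "e \<subseteq> {R + 5 * j..R + 5 * j + 5}" using Tfam_edges[OF 2(2)] by blast
        moreover have "R + 5 * j + 5 < n" using 2(1) n by simp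
        ultimately show "e \<subseteq> {0..<n}" by auto
      qed
      ultimately show ?thesis by blast
    qed
  qed
qed

lemma cyc_list_even:
  assumes "distinct vs" "length vs \<ge> 3" "even (length vs)"
  shows "is_even_cycle (set (map (cedge vs) [0..<length vs]))"
  by (rule mk_even[OF assms]) simp



lemma G7_props: "\<forall>X\<in>set G7_fam. \<forall>e\<in>X. e \<subseteq> {..6}" "\<forall>D\<in>set G7_fam. is_even_cycle D"
proof -
  show "\<forall>X\<in>set G7_fam. \<forall>e\<in>X. e \<subseteq> {..6}" by (simp add: G7_fam_def G7_Q0_def G7_Q1_def G7_Q2_def)
  have "is_even_cycle G7_Q0" by (rule mk_even[of "[0,1,3,2]"]) (auto simp: G7_Q0_def cedge_def upt_rec)
  moreover have "is_even_cycle G7_Q1" by (rule mk_even[of "[0,3,5,4]"]) (auto simp: G7_Q1_def cedge_def upt_rec)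
  moreover have "is_even_cycle G7_Q2" by (rule mk_even[of "[1,4,6,5]"]) (auto simp: G7_Q2_def cedge_def upt_rec)
  ultimately show "\<forall>D\<in>set G7_fam. is_even_cycle D" by (simp add: G7_fam_def)
qed

lemma G8_props: "\<forall>X\<in>set G8_fam. \<forall>e\<in>X. e \<subseteq> {..7}" "\<forall>D\<in>set G8_fam. is_even_cycle D"
proof -
  show "\<forall>X\<in>set G8_fam. \<forall>e\<in>X. e \<subseteq> {..7}" by (simp add: G8_fam_def G8_Q0_def G8_Q1_def)
  have "is_even_cycle G8_Q0" by (rule mk_even[of "[0,1,7,4,3,2]"]) (auto simp: G8_Q0_def cedge_def upt_rec)
  moreover have "is_even_cycle G8_Q1" by (rule mk_even[of "[0,7,6,5]"]) (auto simp: G8_Q1_def cedge_def upt_rec)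
  ultimately show "\<forall>D\<in>set G8_fam. is_even_cycle D" by (simp add: G8_fam_def)
qed

lemma GK_props: "\<forall>X\<in>set GK_fam. \<forall>e\<in>X. e \<subseteq> {..3}" "\<forall>D\<in>set GK_fam. is_even_cycle D"
proof -
  show "\<forall>X\<in>set GK_fam. \<forall>e\<in>X. e \<subseteq> {..3}" by (simp add: GK_fam_def GK_Q0_def)
  have "is_even_cycle GK_Q0" by (rule mk_even[of "[0,1,2,3]"]) (auto simp: GK_Q0_def cedge_def upt_rec)
  then show "\<forall>D\<in>set GK_fam. is_even_cycle D" by (simp add: GK_fam_def)
qed

lemma GF_props: "\<forall>X\<in>set GF_fam. \<forall>e\<in>X. e \<subseteq> {..4}" "\<forall>D\<in>set GF_fam. is_even_cycle D"
proof -
  show "\<forall>X\<in>set GF_fam. \<forall>e\<in>X. e \<subseteq> {..4}" by (simp add: GF_fam_def GF_Q0_def GF_Q1_def)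
  have "is_even_cycle GF_Q0" by (rule mk_even[of "[0,1,3,2]"]) (auto simp: GF_Q0_def cedge_def upt_rec)
  moreover have "is_even_cycle GF_Q1" by (rule mk_even[of "[0,1,4,3]"]) (auto simp: GF_Q1_def cedge_def upt_rec)
  ultimately show "\<forall>D\<in>set GF_fam. is_even_cycle D" by (simp add: GF_fam_def)
qed

theorem mainTheorem2:
  fixes n :: nat
  assumes "n \<ge> 4"
  shows "\<exists>(V :: nat set) Ds. finite V \<and> card V = n \<and>
           length Ds = (6 * (n - 1)) div 5 \<and>
           even_cycle_family_on V Ds \<and> \<not> has_rainbow_even_cycle Ds"
proof -
  define k where "k = (n - 1) div 5"
  define r where "r = (n - 1) mod 5"
  have nk: "n - 1 = 5 * k + r" "r < 5" unfolding k_def r_def by auto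
  have L: "(6 * (n - 1)) div 5 = 6 * k + r" using nk by simp
  have "r = 0 \<or> r = 1 \<or> r = 2 \<or> r = 3 \<or> r = 4" using nk by auto
  then show ?thesis
  proof (elim disjE)
    assume r: "r = 0"
    show ?thesis unfolding L
      by (rule make[of "[]" 0 k]) (use NR_nil nk r assms in auto)
  next
    assume r: "r = 1"
    then have k1: "k \<ge> 1" using nk assms by simp
    show ?thesis unfolding L
      by (rule make[OF G7_props(1) NR_G7 G7_props(2), of "k - 1"]) (use nk r assms k1 in \<open>auto simp: G7_fam_def\<close>)
  next
    assume r: "r = 2"
    then have k1: "k \<ge> 1" using nk assms by simp
    show ?thesis unfolding L
      by (rule make[OF G8_props(1) NR_G8 G8_props(2), of "k - 1"]) (use nk r assms k1 in \<open>auto simp: G8_fam_def\<close>)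
  next
    assume r: "r = 3"
    show ?thesis unfolding L
      by (rule make[OF GK_props(1) NR_GK GK_props(2), of k]) (use nk r assms in \<open>auto simp: GK_fam_def\<close>)
  next
    assume r: "r = 4"
    show ?thesis unfolding L
      by (rule make[OF GF_props(1) NR_GF GF_props(2), of k]) (use nk r assms in \<open>auto simp: GF_fam_def\<close>)
  qed
qed


end
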